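(* For $\lambda>0$ and $k\in\{0,1,2,\ldots\}$ let $p_k(\lambda)=\frac{\lambda^k}{k!}e^{-\lambda}$, and let $(q_k(\lambda))_{k\ge0}$ be the sequence $(p_k(\lambda))_{k\ge0}$ rearranged in non-increasing order (equal terms are kept with their multiplicities). Then for each $n\ge0$ the function $S_n(\lambda)=\sum_{k=0}^n q_k(\lambda)$ is strictly decreasing on $(0,+\infty)$.
   Context: $p_k(\lambda)$ are the probabilities of the Poisson distribution with parameter $\lambda$. Since $p_k(\lambda)\to0$ as $k\to\infty$, the non-increasing rearrangement $(q_k(\lambda))_{k\ge0}$ is well defined: $q_0(\lambda)\ge q_1(\lambda)\ge\cdots$ and $(q_k(\lambda))$ is a permutation of $(p_k(\lambda))$. *)

theory Defs
  imports Complex_Main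
begin

definition poisson_p :: "real \<Rightarrow> nat \<Rightarrow> real" where
  "poisson_p lam k = lam ^ k / fact k * exp (- lam)"

definition noninc_rearrangement :: "(nat \<Rightarrow> real) \<Rightarrow> (nat \<Rightarrow> real) \<Rightarrow> bool" where
  "noninc_rearrangement p q \<longleftrightarrow>
     (\<exists>\<sigma>. bij \<sigma> \<and> (\<forall>k. q k = p (\<sigma> k))) \<and> (\<forall>k. q (Suc k) \<le> q k)"

end

theory Submission
  imports Defs
begin

definition cc :: "nat \<Rightarrow> nat \<Rightarrow> real" where
  "cc n m = (\<Prod>k\<le>n. real (m + k))"

definition FF :: "nat \<Rightarrow> nat \<Rightarrow> real \<Rightarrow> real" where
  "FF n m x = (\<Sum>k\<in>{m..m+n}. poisson_p x k)"

lemma p_Suc: "poisson_p x (Suc j) = poisson_p x j * x / real (Suc j)"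
  unfolding poisson_p_def by (simp add: field_simps)

lemma p_pos: "x > 0 \<Longrightarrow> poisson_p x k > 0"
  unfolding poisson_p_def by simp

lemma p_nonneg: "x \<ge> 0 \<Longrightarrow> poisson_p x k \<ge> 0"
  unfolding poisson_p_def by simp

lemma fact_cc: "fact (j + Suc n) = (fact j :: real) * cc n (Suc j)"
proof (induction n)
  case 0
  then show ?case by (simp add: cc_def)
next
  case (Suc n)
  have "(fact (j + Suc (Suc n)) :: real) = real (j + Suc (Suc n)) * fact (j + Suc n)"
    by (metis add_Suc_right fact_Suc)
  also have "\<dots> = fact j * (cc n (Suc j) * real (Suc j + Suc n))" using Suc by simp
  also have "cc n (Suc j) * real (Suc j + Suc n) = cc (Suc n) (Suc j)"
    unfolding cc_def by simp
  finally show ?case .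
qed

lemma keyrel:
  assumes "0 < m"
  shows "poisson_p x (m + n) * cc n m = poisson_p x (m - 1) * x ^ Suc n"
proof -
  obtain j where m: "m = Suc j" using assms gr0_implies_Suc by blast
  have f: "(fact (j + Suc n) :: real) = fact j * cc n (Suc j)" by (rule fact_cc)
  have cpos: "cc n (Suc j) > 0" unfolding cc_def by (intro prod_pos) auto
  have "poisson_p x (m + n) * cc n m = x ^ (j + Suc n) / fact (j + Suc n) * exp (- x) * cc n (Suc j)"
    unfolding poisson_p_def m by simp
  also have "\<dots> = x ^ j * x ^ Suc n / (fact j * cc n (Suc j)) * exp (- x) * cc n (Suc j)"
    by (simp only: f power_add)
  also have "\<dots> = x ^ j * x ^ Suc n / fact j * exp (-x)"
    using cpos by (simp add: field_simps)
  also have "\<dots> = poisson_p x (m - 1) * x ^ Suc n"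
    unfolding poisson_p_def m by simp
  finally show ?thesis .
qed

lemma cc_pos: "0 < m \<Longrightarrow> cc n m > 0"
  unfolding cc_def by (intro prod_pos) auto

lemma cc_zero: "cc n 0 = 0"
  unfolding cc_def by (simp add: prod_zero_iff)

lemma cc_lower: "real m ^ Suc n \<le> cc n m"
proof -
  have "(\<Prod>k\<le>n. real m) \<le> cc n m"
    unfolding cc_def by (intro prod_mono) auto
  then show ?thesis by simp
qed

lemma cc_upper: "cc n m \<le> real (m + n) ^ Suc n"
proof -
  have "cc n m \<le> (\<Prod>k\<le>n. real (m + n))"
    unfolding cc_def by (intro prod_mono) auto
  then show ?thesis by simp
qed

lemma cc_mono: "cc n m \<le> cc n (Suc m)"
  unfolding cc_def by (intro prod_mono) auto

lemma deriv_p: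
  "((\<lambda>x. poisson_p x k) has_real_derivative
     ((if k = 0 then 0 else poisson_p x (k - 1)) - poisson_p x k)) (at x)"
proof (cases k)
  case 0
  then show ?thesis unfolding poisson_p_def
    by (auto intro!: derivative_eq_intros)
next
  case (Suc j)
  have d1: "((\<lambda>x. x ^ Suc j) has_real_derivative real (Suc j) * x ^ j) (at x)"
    using DERIV_pow[of "Suc j" x] by simp
  have d2: "((\<lambda>x. exp (-x)) has_real_derivative exp (-x) * (-1)) (at x)"
    by (auto intro!: derivative_eq_intros)
  have "((\<lambda>x. x ^ Suc j / fact (Suc j) * exp (- x)) has_real_derivative
     (real (Suc j) * x ^ j / fact (Suc j) * exp (-x) + x ^ Suc j / fact (Suc j) * (exp (-x) * (-1)))) (at x)"
    using DERIV_mult[OF DERIV_cdivide[OF d1, of "fact (Suc j)"] d2] by (simp add: ac_simps)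
  moreover have "real (Suc j) * x ^ j / fact (Suc j) * exp (-x) + x ^ Suc j / fact (Suc j) * (exp (-x) * (-1))
     = poisson_p x j - poisson_p x (Suc j)"
  proof -
    have fs: "(fact (Suc j)::real) = real (Suc j) * fact j" by simp
    have "real (Suc j) * x ^ j / fact (Suc j) = x ^ j / fact j"
      unfolding fs by (metis mult_divide_mult_cancel_left_if of_nat_eq_0_iff nat.distinct(1))
    then show ?thesis unfolding poisson_p_def by (simp add: algebra_simps)
  qed
  ultimately show ?thesis using Suc unfolding poisson_p_def by simp
qed

lemma deriv_F:
  "((\<lambda>x. \<Sum>k\<in>{m..m+j}. poisson_p x k) has_real_derivative
     ((if m = 0 then 0 else poisson_p x (m - 1)) - poisson_p x (m + j))) (at x)"
proof (induction j)
  case 0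
  then show ?case using deriv_p[of m x] by simp
next
  case (Suc j)
  have e: "(\<lambda>x. \<Sum>k\<in>{m..m+Suc j}. poisson_p x k) =
     (\<lambda>x. (\<Sum>k\<in>{m..m+j}. poisson_p x k) + poisson_p x (Suc (m + j)))"
    by (simp add: sum.cl_ivl_Suc)
  have "((\<lambda>x. (\<Sum>k\<in>{m..m+j}. poisson_p x k) + poisson_p x (Suc (m + j))) has_real_derivative
     (((if m = 0 then 0 else poisson_p x (m - 1)) - poisson_p x (m + j)) +
      ((if Suc (m+j) = 0 then 0 else poisson_p x (Suc (m+j) - 1)) - poisson_p x (Suc (m+j))))) (at x)"
    by (intro DERIV_add Suc deriv_p)
  then show ?case unfolding e by simp
qed

lemma F_decr:
  assumes "0 \<le> x" "x < y" "cc n m \<le> x ^ Suc n"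
  shows "FF n m y < FF n m x"
proof -
  have FFe: "FF n m = (\<lambda>x. \<Sum>k\<in>{m..m+n}. poisson_p x k)" by (rule ext) (simp add: FF_def)
  have "\<And>t. x \<le> t \<Longrightarrow> t \<le> y \<Longrightarrow> (FF n m has_real_derivative
     ((if m = 0 then 0 else poisson_p t (m - 1)) - poisson_p t (m + n))) (at t)"
    unfolding FFe by (rule deriv_F)
  from MVT2[OF assms(2) this] obtain z where z: "z > x" "z < y"
    and eq: "FF n m y - FF n m x = (y - x) * ((if m = 0 then 0 else poisson_p z (m - 1)) - poisson_p z (m + n))"
    by blast
  have zpos: "z > 0" using z assms by linarith
  have "x ^ Suc n < z ^ Suc n" using z assms by (intro power_strict_mono) auto
  hence czn: "cc n m < z ^ Suc n" using assms by linarith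
  have neg: "(if m = 0 then 0 else poisson_p z (m - 1)) - poisson_p z (m + n) < 0"
  proof (cases "m = 0")
    case True then show ?thesis using p_pos[OF zpos] by simp
  next
    case False
    then have m: "0 < m" by simp
    have k: "poisson_p z (m + n) * cc n m = poisson_p z (m - 1) * z ^ Suc n" by (rule keyrel[OF m])
    have "poisson_p z (m - 1) * cc n m < poisson_p z (m - 1) * z ^ Suc n"
      using czn p_pos[OF zpos] by simp
    hence "poisson_p z (m - 1) * cc n m < poisson_p z (m + n) * cc n m" using k by simp
    hence "poisson_p z (m - 1) < poisson_p z (m + n)" using cc_pos[of m n] m
      by (simp add: mult_less_cancel_right)
    then show ?thesis using False by simp
  qed
  have "(y - x) * ((if m = 0 then 0 else poisson_p z (m - 1)) - poisson_p z (m + n)) < 0"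
    using neg assms(2) by (simp add: mult_pos_neg)
  then show ?thesis using eq by simp
qed

lemma F_step:
  assumes "t ^ Suc n = cc n (Suc m)"
  shows "FF n (Suc m) t = FF n m t"
proof -
  have k: "poisson_p t (Suc m + n) * cc n (Suc m) = poisson_p t m * t ^ Suc n"
    using keyrel[of "Suc m" t n] by simp
  have "poisson_p t (Suc m + n) = poisson_p t m"
    using k assms cc_pos[of "Suc m" n] by simp
  have "(\<Sum>k\<in>{m..Suc (m+n)}. poisson_p t k) = FF n m t + poisson_p t (Suc (m+n))"
    unfolding FF_def by (simp add: sum.cl_ivl_Suc)
  moreover have "(\<Sum>k\<in>{m..Suc (m+n)}. poisson_p t k) = poisson_p t m + FF n (Suc m) t"
    unfolding FF_def by (subst sum.atLeast_Suc_atMost) auto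
  ultimately show ?thesis using \<open>poisson_p t (Suc m + n) = poisson_p t m\<close> by simp
qed

lemma top_sum:
  fixes q :: "nat \<Rightarrow> real"
  assumes dec: "\<forall>k. q (Suc k) \<le> q k"
  shows "finite J \<Longrightarrow> card J = Suc n \<Longrightarrow> sum q J \<le> sum q {..n}"
proof (induction n arbitrary: J)
  have anti: "\<And>i j. i \<le> j \<Longrightarrow> q j \<le> q i"
    using dec by (metis decseq_Suc_iff decseq_def)
  {
  case 0
  then obtain x where "J = {x}" by (metis card_1_singletonE One_nat_def)
  then show ?case using anti[of 0 x] by simp
  next
  case (Suc n)
  define M where "M = Max J"
  have ne: "J \<noteq> {}" using Suc.prems by auto
  have MJ: "M \<in> J" unfolding M_def using Suc.prems ne by simp
  have "J \<subseteq> {..M}" unfolding M_def using Suc.prems by auto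
  hence "card J \<le> Suc M" using card_mono[of "{..M}" J] by simp
  hence "Suc n \<le> M" using Suc.prems by simp
  have c: "card (J - {M}) = Suc n" using Suc.prems MJ by simp
  have "sum q J = q M + sum q (J - {M})" using Suc.prems MJ by (simp add: sum.remove)
  also have "\<dots> \<le> q (Suc n) + sum q {..n}"
    using Suc.IH[of "J - {M}"] c Suc.prems anti[OF \<open>Suc n \<le> M\<close>] by simp
  also have "\<dots> = sum q {..Suc n}" by simp
  finally show ?case .
  }
qed

lemma exchange:
  fixes f :: "nat \<Rightarrow> real"
  assumes "finite B" "finite W" "card B = card W"
    "\<forall>k\<in>W. \<theta> \<le> f k" "\<forall>k. k \<notin> W \<longrightarrow> f k \<le> \<theta>"
  shows "sum f B \<le> sum f W"
proof -
  have c: "card (B - W) = card (W - B)"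
    using assms(1,2,3) by (metis card_Diff_subset_Int finite_Int inf_commute)
  have "sum f B = sum f (B - W) + sum f (B \<inter> W)"
    using assms(1) by (metis add.commute sum.Int_Diff)
  moreover have "sum f W = sum f (W - B) + sum f (B \<inter> W)"
    using assms(2) by (metis add.commute inf_commute sum.Int_Diff)
  moreover have "sum f (B - W) \<le> of_nat (card (B - W)) * \<theta>"
    using assms(5) sum_bounded_above[of "B - W" f \<theta>] by auto
  moreover have "of_nat (card (W - B)) * \<theta> \<le> sum f (W - B)"
    using assms(4) sum_bounded_below[of "W - B" \<theta> f] by auto
  ultimately show ?thesis using c by simp
qed

lemma monoA: "i \<le> k \<Longrightarrow> real k \<le> x \<Longrightarrow> poisson_p x i \<le> poisson_p x k"
proof (induction k)
  case 0 then show ?case by simp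
next
  case (Suc k)
  show ?case
  proof (cases "i = Suc k")
    case True then show ?thesis by simp
  next
    case False
    then have "i \<le> k" using Suc by simp
    have x0: "x \<ge> 0" using Suc.prems by simp
    have "poisson_p x i \<le> poisson_p x k" using Suc \<open>i \<le> k\<close> by simp
    also have "poisson_p x k \<le> poisson_p x k * x / real (Suc k)"
    proof -
      have "poisson_p x k * 1 \<le> poisson_p x k * (x / real (Suc k))"
        using Suc.prems p_nonneg[OF x0, of k] by (intro mult_left_mono) (auto simp: field_simps)
      then show ?thesis by simp
    qed
    finally show ?thesis by (simp add: p_Suc)
  qed
qed

lemma monoB: "0 \<le> x \<Longrightarrow> x \<le> real i + 1 \<Longrightarrow> i \<le> k \<Longrightarrow> poisson_p x k \<le> poisson_p x i"
proof (induction k)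
  case 0 then show ?case by simp
next
  case (Suc k)
  show ?case
  proof (cases "i = Suc k")
    case True then show ?thesis by simp
  next
    case False
    then have "i \<le> k" using Suc by simp
    have "poisson_p x (Suc k) = poisson_p x k * (x / real (Suc k))" by (simp add: p_Suc)
    also have "\<dots> \<le> poisson_p x k * 1"
      using Suc.prems \<open>i \<le> k\<close> p_nonneg[OF Suc.prems(1), of k]
      by (intro mult_left_mono) (auto simp: field_simps)
    also have "\<dots> \<le> poisson_p x i" using Suc \<open>i \<le> k\<close> by simp
    finally show ?thesis .
  qed
qed

lemma S_ge_F:
  assumes "noninc_rearrangement (poisson_p x) Q"
  shows "FF n m x \<le> (\<Sum>k\<le>n. Q k)"
proof -
  obtain \<sigma> where bs: "bij \<sigma>" and Qe: "\<forall>k. Q k = poisson_p x (\<sigma> k)"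
    and dec: "\<forall>k. Q (Suc k) \<le> Q k"
    using assms unfolding noninc_rearrangement_def by blast
  define W where "W = {m..m+n}"
  define J where "J = \<sigma> -` W"
  have inj: "inj \<sigma>" using bs bij_is_inj by blast
  have im: "\<sigma> ` J = W" unfolding J_def using bs by (simp add: bij_is_surj surj_image_vimage_eq)
  have fJ: "finite J" unfolding J_def W_def using inj by (intro finite_vimageI) auto
  have cJ: "card J = Suc n"
    using card_image[OF inj_on_subset[OF inj subset_UNIV, of J]] im unfolding W_def by simp
  have "FF n m x = sum (poisson_p x) (\<sigma> ` J)" unfolding FF_def im W_def by simp
  also have "\<dots> = sum (\<lambda>k. poisson_p x (\<sigma> k)) J"
    using sum.reindex[OF inj_on_subset[OF inj subset_UNIV, of J]] by simp
  also have "\<dots> = sum Q J" using Qe by simp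
  also have "\<dots> \<le> sum Q {..n}" by (rule top_sum[OF dec fJ cJ])
  finally show ?thesis .
qed

lemma S_le_F:
  assumes "noninc_rearrangement (poisson_p x) Q" "x > 0"
  shows "\<exists>m. cc n m \<le> x ^ Suc n \<and> (\<Sum>k\<le>n. Q k) \<le> FF n m x"
proof -
  obtain \<sigma> where bs: "bij \<sigma>" and Qe: "\<forall>k. Q k = poisson_p x (\<sigma> k)"
    using assms unfolding noninc_rearrangement_def by blast
  have inj: "inj \<sigma>" using bs bij_is_inj by blast
  define MM where "MM = {m. cc n m \<le> x ^ Suc n}"
  have MMb: "\<And>m. m \<in> MM \<Longrightarrow> real m \<le> x"
  proof -
    fix m assume "m \<in> MM"
    then have "real m ^ Suc n \<le> x ^ Suc n" using cc_lower[of m n] unfolding MM_def by simp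
    then show "real m \<le> x" using assms(2) by (meson less_imp_le power_le_imp_le_base)
  qed
  have fin: "finite MM"
  proof (rule finite_subset[of _ "{..nat \<lfloor>x\<rfloor>}"])
    show "MM \<subseteq> {..nat \<lfloor>x\<rfloor>}" using MMb le_nat_floor by auto
  qed simp
  have "0 \<in> MM" unfolding MM_def using cc_zero assms(2) by simp
  define m where "m = Max MM"
  have mM: "m \<in> MM" unfolding m_def using fin \<open>0 \<in> MM\<close> by (intro Max_in) auto
  have "Suc m \<notin> MM" using fin unfolding m_def by (metis Max_ge Suc_n_not_le_n)
  hence lt: "x ^ Suc n < cc n (Suc m)" unfolding MM_def by simp
  have le: "cc n m \<le> x ^ Suc n" using mM unfolding MM_def by simp
  have xm: "real m \<le> x" using MMb mM by simp
  have "x ^ Suc n < real (Suc m + n) ^ Suc n" using lt cc_upper[of n "Suc m"] by simp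
  hence xu: "x < real (Suc m + n)" using assms(2) by (meson less_imp_le power_less_imp_less_base of_nat_0_le_iff)
  define \<theta> where "\<theta> = min (poisson_p x m) (poisson_p x (m + n))"
  define W where "W = {m..m+n}"
  have x0: "0 \<le> x" using assms by simp
  have inW: "\<forall>k\<in>W. \<theta> \<le> poisson_p x k"
  proof
    fix k assume "k \<in> W"
    then have k: "m \<le> k" "k \<le> m + n" unfolding W_def by auto
    show "\<theta> \<le> poisson_p x k"
    proof (cases "real k \<le> x")
      case True
      then show ?thesis using monoA[OF k(1) True] unfolding \<theta>_def by simp
    next
      case False
      then show ?thesis using monoB[OF x0 _ k(2)] unfolding \<theta>_def by simp
    qed
  qed
  have outW: "\<forall>k. k \<notin> W \<longrightarrow> poisson_p x k \<le> \<theta>"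
  proof (intro allI impI)
    fix k assume "k \<notin> W"
    then consider "k < m" | "m + n < k" unfolding W_def by force
    then show "poisson_p x k \<le> \<theta>"
    proof cases
      case 1
      then have m0: "0 < m" by simp
      have a1: "poisson_p x k \<le> poisson_p x (m - 1)" using 1 xm by (intro monoA) auto
      have a2: "poisson_p x k \<le> poisson_p x m" using 1 xm by (intro monoA) auto
      have kr: "poisson_p x (m + n) * cc n m = poisson_p x (m - 1) * x ^ Suc n" by (rule keyrel[OF m0])
      have "poisson_p x (m - 1) * cc n m \<le> poisson_p x (m - 1) * x ^ Suc n"
        using le p_nonneg[OF x0] by (intro mult_left_mono) auto
      hence "poisson_p x (m - 1) * cc n m \<le> poisson_p x (m + n) * cc n m" using kr by simp
      hence "poisson_p x (m - 1) \<le> poisson_p x (m + n)" using cc_pos[of m n] m0 by simp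
      then show ?thesis using a1 a2 unfolding \<theta>_def by simp
    next
      case 2
      have b1: "poisson_p x k \<le> poisson_p x (m + n)" using 2 xu x0 by (intro monoB) auto
      have b2: "poisson_p x k \<le> poisson_p x (Suc (m + n))" using 2 xu x0 by (intro monoB) auto
      have kr: "poisson_p x (Suc m + n) * cc n (Suc m) = poisson_p x m * x ^ Suc n"
        using keyrel[of "Suc m" x n] by simp
      have "poisson_p x m * x ^ Suc n < poisson_p x m * cc n (Suc m)"
        using lt p_pos[OF assms(2)] by simp
      hence "poisson_p x (Suc m + n) * cc n (Suc m) < poisson_p x m * cc n (Suc m)" using kr by simp
      hence "poisson_p x (Suc m + n) < poisson_p x m" using cc_pos[of "Suc m" n]
        by (simp add: mult_less_cancel_right)
      then show ?thesis using b1 b2 unfolding \<theta>_def by simp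
    qed
  qed
  define B where "B = \<sigma> ` {..n}"
  have cB: "card B = Suc n" unfolding B_def
    using card_image[OF inj_on_subset[OF inj subset_UNIV, of "{..n}"]] by simp
  have "(\<Sum>k\<le>n. Q k) = (\<Sum>k\<le>n. poisson_p x (\<sigma> k))" using Qe by simp
  also have "\<dots> = sum (poisson_p x) B"
    unfolding B_def using sum.reindex[OF inj_on_subset[OF inj subset_UNIV, of "{..n}"], of "poisson_p x"] by simp
  also have "\<dots> \<le> sum (poisson_p x) W"
    by (rule exchange[OF _ _ _ inW outW]) (auto simp: W_def cB card_ge_0_finite)
  also have "\<dots> = FF n m x" unfolding FF_def W_def by simp
  finally show ?thesis using le by blast
qed

theorem lemma1:
  fixes q :: "real \<Rightarrow> nat \<Rightarrow> real" and n :: nat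
  assumes "\<And>lam. lam > 0 \<Longrightarrow> noninc_rearrangement (poisson_p lam) (q lam)"
  shows "\<forall>a b. 0 < a \<and> a < b \<longrightarrow> (\<Sum>k\<le>n. q b k) < (\<Sum>k\<le>n. q a k)"
proof (intro allI impI)
  fix a b :: real assume ab: "0 < a \<and> a < b"
  have claim: "\<And>c. cc n m \<le> c ^ Suc n \<Longrightarrow> a < c \<Longrightarrow> FF n m c < (\<Sum>k\<le>n. q a k)" for m
  proof (induction m)
    case 0
    have "FF n 0 c < FF n 0 a" using ab 0 cc_zero by (intro F_decr) auto
    also have "\<dots> \<le> (\<Sum>k\<le>n. q a k)" using S_ge_F assms ab by blast
    finally show ?case .
  next
    case (Suc m)
    show ?case
    proof (cases "cc n (Suc m) \<le> a ^ Suc n")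
      case True
      have "FF n (Suc m) c < FF n (Suc m) a" using ab Suc.prems True by (intro F_decr) auto
      also have "\<dots> \<le> (\<Sum>k\<le>n. q a k)" using S_ge_F assms ab by blast
      finally show ?thesis .
    next
      case False
      define t where "t = root (Suc n) (cc n (Suc m))"
      have cp: "0 \<le> cc n (Suc m)" using cc_pos[of "Suc m" n] by simp
      have t0: "0 \<le> t" unfolding t_def using cp by simp
      have tp: "t ^ Suc n = cc n (Suc m)" unfolding t_def using cp by (metis real_root_pow_pos2 zero_less_Suc)
      have "a ^ Suc n < t ^ Suc n" using False tp by simp
      hence at: "a < t" using t0 by (meson power_less_imp_less_base)
      have "t ^ Suc n \<le> c ^ Suc n" using tp Suc.prems by simp
      hence tc: "t \<le> c" using ab Suc.prems by (meson less_imp_le order.strict_trans power_le_imp_le_base)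
      have "FF n (Suc m) c \<le> FF n (Suc m) t"
      proof (cases "t = c")
        case False
        then have "t < c" using tc by simp
        then show ?thesis using F_decr[OF t0 _] tp by (simp add: less_imp_le)
      qed simp
      also have "\<dots> = FF n m t" by (rule F_step[OF tp])
      also have "\<dots> < (\<Sum>k\<le>n. q a k)"
        using Suc.IH[of t] tp cc_mono[of n m] at by simp
      finally show ?thesis .
    qed
  qed
  have b0: "b > 0" using ab by simp
  obtain m where m: "cc n m \<le> b ^ Suc n" "(\<Sum>k\<le>n. q b k) \<le> FF n m b"
    using S_le_F[OF assms[OF b0] b0] by blast
  show "(\<Sum>k\<le>n. q b k) < (\<Sum>k\<le>n. q a k)"
    using m claim[OF m(1)] ab by simp
qed

end
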